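(* There do not exist primes $p, q$ and positive integers $x, y, z$ such that \[ x^3 - 1 = p^3 y^2 \quad \text{and} \quad x^3 + 1 = q^3 z^2 . \] Equivalently, there are no three consecutive powerful numbers of the form $x^3 - 1 = p^3 y^2$, $x^3$, $x^3 + 1 = q^3 z^2$ with $p, q$ prime and $x, y, z$ positive integers.
   Context: A positive integer $n$ is called powerful if $p^2 \mid n$ for every prime $p$ dividing $n$. *)

theory Defs
  imports "HOL-Computational_Algebra.Primes"
begin

end

theory Submission
  imports Defs "HOL-Computational_Algebra.Nth_Powers"
begin

lemma sqL:
  fixes A B c y :: int
  assumes "A > 0" "B > 0" "c > 0" "coprime A B" "coprime A c" "A * B = c * y^2"
  shows "\<exists>w. A = w^2"
proof -
  have e: "A * (B * c) = (c * y)^2" using assms(6) by (simp add: power2_eq_square algebra_simps)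
  have cop: "coprime A (B * c)" using assms(4,5) by simp
  have Bc: "B * c > 0" using assms by simp
  have en: "nat A * nat (B * c) = (nat \<bar>c * y\<bar>)^2"
    using e assms(1) Bc by (metis abs_of_nonneg nat_mult_distrib nat_power_eq abs_ge_zero less_imp_le power2_abs)
  have copn: "coprime (nat A) (nat (B*c))" using cop assms(1) Bc
    by (simp add: coprime_int_iff[symmetric])
  have "is_nth_power 2 (nat A * nat (B * c))" using en by (auto simp: is_nth_power_def)
  then have "is_nth_power 2 (nat A)" using is_nth_power_mult_coprime_natD(1)[OF copn] assms(1) Bc by simp
  then obtain w where "nat A = w^2" by (auto simp: is_nth_power_def)
  then have "A = (int w)^2" using assms(1) by (metis int_nat_eq less_imp_le of_nat_power)
  then show ?thesis by blast
qed

lemma nonsq: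
  fixes n N w :: int
  assumes "0 \<le> n" "n^2 < N" "N < (n+1)^2"
  shows "N \<noteq> w^2"
proof
  assume h: "N = w^2"
  have hw: "N = \<bar>w\<bar>^2" using h by simp
  show False
  proof (cases "\<bar>w\<bar> \<le> n")
    case True
    then have "\<bar>w\<bar>^2 \<le> n^2" by (intro power_mono) auto
    then show False using hw assms by linarith
  next
    case False
    then have "(n+1)^2 \<le> \<bar>w\<bar>^2" using assms(1) by (intro power_mono) auto
    then show False using hw assms by linarith
  qed
qed

lemma bez: "a*s + b*t = (1::int) \<Longrightarrow> coprime s t"
  by (metis coprime_iff_gcd_eq_1 dvd_add dvd_mult gcd_dvd1 gcd_dvd2 is_unit_gcd)

lemma D1:
  fixes k a w :: int
  assumes "k > 0" "a^2 = 3*k^2+3*k+1" "w^2 = 3*k^2+2*k+1"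
  shows False
proof -
  define a' where "a' = \<bar>a\<bar>"
  define w' where "w' = \<bar>w\<bar>"
  have a2: "a'^2 = 3*k^2+3*k+1" and w2: "w'^2 = 3*k^2+2*k+1" using assms by (simp_all add: a'_def w'_def)
  have pos: "a' \<ge> 0" "w' \<ge> 0" by (simp_all add: a'_def w'_def)
  have "w'^2 < a'^2" using a2 w2 assms(1) by linarith
  then have "w' < a'" using pos by (meson power_less_imp_less_base)
  then have "w' + 1 \<le> a'" by simp
  then have "(w'+1)^2 \<le> a'^2" using pos by (intro power_mono) auto
  then have k1: "2*w'+1 \<le> k" using a2 w2 by (simp add: power2_eq_square algebra_simps)
  then have "(2*w'+1)^2 \<le> k^2" using pos by (intro power_mono) auto
  moreover have "(2*w'+1)^2 = 4*w'^2+4*w'+1" by (simp add: power2_eq_square algebra_simps)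
  moreover have "w'^2 \<ge> 0" by simp
  ultimately show False using w2 pos assms(1) by linarith
qed

lemma D2:
  fixes k a w :: int
  assumes "k \<ge> 0" "a^2 = 3*k^2+3*k+1" "w^2 = 3*k^2+4*k+2"
  shows False
proof -
  define a' where "a' = \<bar>a\<bar>"
  define w' where "w' = \<bar>w\<bar>"
  have a2: "a'^2 = 3*k^2+3*k+1" and w2: "w'^2 = 3*k^2+4*k+2" using assms by (simp_all add: a'_def w'_def)
  have pos: "a' \<ge> 0" "w' \<ge> 0" by (simp_all add: a'_def w'_def)
  have "a'^2 < w'^2" using a2 w2 assms(1) by linarith
  then have "a' < w'" using pos by (meson power_less_imp_less_base)
  then have "a' + 1 \<le> w'" by simp
  then have "(a'+1)^2 \<le> w'^2" using pos by (intro power_mono) auto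
  then have k1: "2*a' \<le> k" using a2 w2 by (simp add: power2_eq_square algebra_simps)
  then have "(2*a')^2 \<le> k^2" using pos by (intro power_mono) auto
  moreover have "(2*a')^2 = 4*a'^2" by (simp add: power2_eq_square algebra_simps)
  moreover have "a'^2 \<ge> 0" by simp
  ultimately show False using a2 pos assms(1) by linarith
qed

lemma side:
  fixes D F y :: int and p :: nat
  assumes "prime p" "D > 0" "F > 0" "y > 0" "coprime D F" "D * F = int p^3 * y^2" "\<And>w. F \<noteq> w^2"
  shows "\<exists>u. D = u^2"
proof (cases "int p dvd F")
  case True
  have pi: "prime (int p)" using assms(1) by simp
  have "\<not> int p dvd D"
  proof
    assume "int p dvd D"
    then have "is_unit (int p)" using True assms(5) by (meson coprime_common_divisor)
    then show False using pi not_prime_unit by blast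
  qed
  then have "coprime D (int p)" using pi by (metis prime_imp_coprime coprime_commute)
  then have "coprime D (int p^3)" by simp
  moreover have "int p^3 > 0" using assms(1) prime_gt_0_nat by simp
  ultimately show ?thesis using sqL[of D F "int p^3" y, OF assms(2,3) _ assms(5) _ assms(6)] by blast
next
  case False
  have pi: "prime (int p)" using assms(1) by simp
  then have "coprime F (int p)" using False by (metis prime_imp_coprime coprime_commute)
  then have "coprime F (int p^3)" by simp
  moreover have "int p^3 > 0" using assms(1) prime_gt_0_nat by simp
  moreover have "F * D = int p^3 * y^2" using assms(6) by (simp add: mult.commute)
  moreover have "coprime F D" using assms(5) by (simp add: coprime_commute)
  ultimately have "\<exists>w. F = w^2" using sqL[of F D "int p^3" y, OF assms(3,2)] by blast
  then show ?thesis using assms(7) by blast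
qed

lemma cop3: "\<not> 3 dvd (a::int) \<Longrightarrow> b = k*a + 3 \<Longrightarrow> coprime a b"
proof -
  assume h: "\<not> 3 dvd a" "b = k*a + 3"
  have "gcd a b = gcd a 3" using h(2) gcd_add_mult[of a k 3] by simp
  moreover have "coprime 3 a" using h(1) by (intro prime_imp_coprime) auto
  ultimately show ?thesis by (metis coprime_commute coprime_iff_gcd_eq_1)
qed

lemma sq4: "\<exists>t. (u::int)^2 = 4*t \<or> u^2 = 4*t+1"
proof (cases "even u")
  case True then obtain j where "u = 2*j" by blast
  then show ?thesis by (intro exI[of _ "j^2"]) (simp add: power2_eq_square)
next
  case False then obtain j where "u = 2*j+1" by (meson oddE)
  then show ?thesis by (intro exI[of _ "j^2+j"]) (simp add: power2_eq_square algebra_simps)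
qed

lemma sq3: "\<exists>t. (u::int)^2 = 3*t \<or> u^2 = 3*t+1"
proof -
  define j where "j = u div 3"
  define r where "r = u mod 3"
  have u: "u = 3*j + r" "0 \<le> r" "r < 3" unfolding j_def r_def by simp_all
  then have "r = 0 \<or> r = 1 \<or> r = 2" by auto
  then show ?thesis
  proof (elim disjE)
    assume "r = 0" then show ?thesis using u by (intro exI[of _ "3*j^2"]) (simp add: power2_eq_square)
  next
    assume "r = 1" then show ?thesis using u by (intro exI[of _ "3*j^2+2*j"]) (simp add: power2_eq_square algebra_simps)
  next
    assume "r = 2" then show ?thesis using u by (intro exI[of _ "3*j^2+4*j+1"]) (simp add: power2_eq_square algebra_simps)
  qed
qed

lemma copST: "coprime S (2::int) \<Longrightarrow> coprime S e \<Longrightarrow> T = 3*S + 2*e \<Longrightarrow> coprime S T"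
proof -
  assume h: "coprime S (2::int)" "coprime S e" "T = 3*S + 2*e"
  have "gcd S T = gcd S (2*e)" using h(3) gcd_add_mult[of S 3 "2*e"] by simp
  moreover have "coprime S (2*e)" using h by simp
  ultimately show ?thesis by (metis coprime_iff_gcd_eq_1)
qed

lemma Sodd: "coprime (3*k^2+3*k+1) (2::int)"
proof -
  have "even (k*(k+1))" by simp
  then obtain j where "k*(k+1) = 2*j" by blast
  then have "3*k^2+3*k+1 = 1 * 1 + 2*(3*j)" by (simp add: power2_eq_square algebra_simps)
  then have "1*(3*k^2+3*k+1) + (-(3*j))*2 = 1" by simp
  then show ?thesis by (rule bez)
qed

lemma G:
  fixes S T R M Qc :: int and q :: nat
  assumes q: "prime q" and Qc: "Qc = int q^3" and R: "R = S*T" and pos: "S>0" "T>0" "M>0"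
    and cST: "coprime S T" and cRM: "coprime R M"
    and Tns: "\<And>w. T \<noteq> w^2"
    and K: "(\<exists>a. R = a^2) \<or> (\<exists>w z'. M = w^2 \<and> int q dvd R \<and> R * M = Qc * z'^2)"
    and desc: "\<And>a w. S = a^2 \<Longrightarrow> M = w^2 \<Longrightarrow> False"
  shows False
proof -
  have qi: "prime (int q)" using q by simp
  have Qpos: "Qc > 0" using Qc q prime_gt_0_nat by simp
  from K show False
  proof (elim disjE exE conjE)
    fix a assume "R = a^2"
    then have "T * S = 1 * a^2" using R by (simp add: mult.commute)
    moreover have "coprime T S" using cST by (simp add: coprime_commute)
    ultimately have "\<exists>w. T = w^2" using sqL[of T S 1 a] pos by simp
    then show False using Tns by blast
  next
    fix w z' assume M: "M = w^2" and qR: "int q dvd R" and e: "R * M = Qc * z'^2"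
    have cSM: "coprime S M" and cTM: "coprime T M" using cRM R by simp_all
    show False
    proof (cases "int q dvd T")
      case True
      have "\<not> int q dvd S"
      proof
        assume "int q dvd S"
        then have "is_unit (int q)" using True cST by (meson coprime_common_divisor)
        then show False using qi not_prime_unit by blast
      qed
      then have "coprime S (int q)" using qi by (metis prime_imp_coprime coprime_commute)
      then have "coprime S Qc" using Qc by simp
      moreover have "coprime S (T*M)" using cST cSM by simp
      moreover have "S * (T*M) = Qc * z'^2" using e R by (simp add: algebra_simps)
      moreover have "T*M > 0" using pos by simp
      ultimately obtain a where "S = a^2" using sqL[of S "T*M" Qc z'] pos Qpos by blast
      then show False using desc M by blast
    next
      case False
      then have "coprime T (int q)" using qi by (metis prime_imp_coprime coprime_commute)
      then have "coprime T Qc" using Qc by simp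
      moreover have "coprime T (S*M)" using cST cTM by (simp add: coprime_commute)
      moreover have "T * (S*M) = Qc * z'^2" using e R by (simp add: algebra_simps)
      moreover have "S*M > 0" using pos by simp
      ultimately obtain a where "T = a^2" using sqL[of T "S*M" Qc z'] pos Qpos by blast
      then show False using Tns by blast
    qed
  qed
qed

theorem theorem1:
  shows "\<not> (\<exists>(p::nat) (q::nat) (x::int) (y::int) (z::int).
            prime p \<and> prime q \<and> x > 0 \<and> y > 0 \<and> z > 0 \<and>
            x ^ 3 - 1 = int p ^ 3 * y ^ 2 \<and> x ^ 3 + 1 = int q ^ 3 * z ^ 2)"
proof
  assume "\<exists>(p::nat) (q::nat) (x::int) (y::int) (z::int).
            prime p \<and> prime q \<and> x > 0 \<and> y > 0 \<and> z > 0 \<and>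
            x ^ 3 - 1 = int p ^ 3 * y ^ 2 \<and> x ^ 3 + 1 = int q ^ 3 * z ^ 2"
  then obtain p q :: nat and x y z :: int where H: "prime p" "prime q" "x > 0" "y > 0" "z > 0"
     "x ^ 3 - 1 = int p ^ 3 * y ^ 2" "x ^ 3 + 1 = int q ^ 3 * z ^ 2" by blast
  define P where "P = int p^3"
  define Qc where "Qc = int q^3"
  have p2: "int p \<ge> 2" using H(1) prime_ge_2_nat by fastforce
  have "(2::int)^3 \<le> int p^3" using p2 by (intro power_mono) auto
  then have P8: "P \<ge> 8" by (simp add: P_def)
  have "y^2 \<ge> 1" using H(4) by (simp add: one_le_power)
  then have "P * y^2 \<ge> P * 1" using P8 by (intro mult_left_mono) auto
  then have x3: "x^3 \<ge> 9" using H(6) P8 P_def by simp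
  have x3': "x \<ge> 3"
  proof (rule ccontr)
    assume "\<not> x \<ge> 3"
    then have "x \<le> 2" by simp
    then have "x^3 \<le> 2^3" using H(3) by (intro power_mono) auto
    then show False using x3 by simp
  qed
  have f1: "(x-1)*(x^2+x+1) = P*y^2" using H(6) P_def
    by (simp add: power2_eq_square power3_eq_cube algebra_simps)
  have f2: "(x+1)*(x^2-x+1) = Qc*z^2" using H(7) Qc_def
    by (simp add: power2_eq_square power3_eq_cube algebra_simps)
  have ns1: "\<And>w. x^2+x+1 \<noteq> w^2"
    by (rule nonsq[of x]) (use H(3) in \<open>simp_all add: power2_eq_square algebra_simps\<close>)
  have ns2: "\<And>w. x^2-x+1 \<noteq> w^2"
    by (rule nonsq[of "x-1"]) (use x3' in \<open>simp_all add: power2_eq_square algebra_simps\<close>)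
  have xx: "x^2 \<ge> x" using H(3) by (simp add: power2_eq_square)
  have pos1: "x^2+x+1 > 0" and pos2: "x^2-x+1 > 0" using xx H(3) by simp_all
  define j where "j = x div 3"
  define r where "r = x mod 3"
  have xj: "x = 3*j + r" "0 \<le> r" "r < 3" unfolding j_def r_def by simp_all
  have "r = 0 \<or> r = 1 \<or> r = 2" using xj by auto
  then show False
  proof (elim disjE)
    assume r0: "r = 0"
    have c1: "coprime (x-1) (x^2+x+1)"
      by (rule cop3[where k="x+2"]) (use xj r0 in \<open>presburger\<close>, simp add: power2_eq_square algebra_simps)
    obtain u where u: "x-1 = u^2" using side[OF H(1) _ pos1 H(4) c1 _ ns1] f1 P_def H(3) x3' by auto
    have c2: "coprime (x+1) (x^2-x+1)"
      by (rule cop3[where k="x-2"]) (use xj r0 in \<open>presburger\<close>, simp add: power2_eq_square algebra_simps)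
    obtain v where v: "x+1 = v^2" using side[OF H(2) _ pos2 H(5) c2 _ ns2] f2 Qc_def H(3) x3' by auto
    obtain t1 where t1: "u^2 = 4*t1 \<or> u^2 = 4*t1+1" using sq4 by blast
    obtain t2 where t2: "v^2 = 4*t2 \<or> v^2 = 4*t2+1" using sq4 by blast
    have "v^2 = u^2 + 2" using u v by simp
    then show False using t1 t2 by presburger
  next
    assume r1: "r = 1"
    have c2: "coprime (x+1) (x^2-x+1)"
      by (rule cop3[where k="x-2"]) (use xj r1 in \<open>presburger\<close>, simp add: power2_eq_square algebra_simps)
    obtain v where v: "x+1 = v^2" using side[OF H(2) _ pos2 H(5) c2 _ ns2] f2 Qc_def H(3) x3' by auto
    obtain t where t: "v^2 = 3*t \<or> v^2 = 3*t+1" using sq3 by blast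
    show False using t v xj r1 by presburger
  next
    assume r2: "r = 2"
    have c1: "coprime (x-1) (x^2+x+1)"
      by (rule cop3[where k="x+2"]) (use xj r2 in \<open>presburger\<close>, simp add: power2_eq_square algebra_simps)
    obtain u0 where u0: "x-1 = u0^2" using side[OF H(1) _ pos1 H(4) c1 _ ns1] f1 P_def H(3) x3' by auto
    define u where "u = \<bar>u0\<bar>"
    have u: "u^2 = 3*j+1" "u \<ge> 0" using u0 xj r2 by (simp_all add: u_def)
    define m where "m = j"
    have m1: "m \<ge> 1" using x3' xj r2 m_def by simp
    define R where "R = 3*m^2+3*m+1"
    have f2': "R * (9*(m+1)) = Qc * z^2" using f2 xj r2 unfolding R_def m_def
      by (simp add: power2_eq_square algebra_simps)
    have cRM: "coprime R (m+1)" by (rule bez[where a=1 and b="-3*m"]) (simp add: R_def power2_eq_square algebra_simps)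
    have cR3: "coprime R 3" by (rule bez[where a=1 and b="-(m^2+m)"]) (simp add: R_def power2_eq_square algebra_simps)
    have Rpos: "R > 0" using m1 by (simp add: R_def)
    have qi: "prime (int q)" using H(2) by simp
    have Qpos: "Qc > 0" using Qc_def H(2) prime_gt_0_nat by simp
    have K: "(\<exists>a. R = a^2) \<or> (\<exists>w z'. m+1 = w^2 \<and> int q dvd R \<and> R * (m+1) = Qc * z'^2)"
    proof (cases "int q dvd R")
      case True
      have q3: "int q \<noteq> 3"
      proof
        assume "int q = 3"
        then have "is_unit (3::int)" using True cR3 by (metis coprime_common_divisor dvd_refl)
        then show False by simp
      qed
      have "Qc * z^2 = 3 * (R*(3*(m+1)))" using f2' by (simp add: algebra_simps)
      then have "(3::int) dvd Qc * z^2" by (metis dvd_triv_left)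
      moreover have p3: "prime (3::int)" by simp
      ultimately have "3 dvd Qc \<or> 3 dvd z^2" by (simp add: prime_dvd_mult_iff)
      moreover have "\<not> (3::int) dvd Qc"
      proof
        assume "(3::int) dvd Qc"
        then have "3 dvd int q" using p3 Qc_def prime_dvd_power by blast
        then have "3 = int q" using p3 qi by (simp add: primes_dvd_imp_eq)
        then show False using q3 by simp
      qed
      ultimately have "(3::int) dvd z" using p3 prime_dvd_power by blast
      then obtain z' where z': "z = 3*z'" by blast
      have e: "(m+1) * R = Qc * z'^2" using f2' z' by (simp add: power2_eq_square algebra_simps)
      have "\<not> int q dvd (m+1)"
      proof
        assume "int q dvd (m+1)"
        then have "is_unit (int q)" using True cRM by (meson coprime_common_divisor)
        then show False using qi not_prime_unit by blast
      qed
      then have "coprime (m+1) (int q)" using qi by (metis prime_imp_coprime coprime_commute)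
      then have "coprime (m+1) Qc" using Qc_def by simp
      moreover have "coprime (m+1) R" using cRM by (simp add: coprime_commute)
      ultimately obtain w where "m+1 = w^2" using sqL[of "m+1" R Qc z'] e m1 Rpos Qpos by auto
      then show ?thesis using True e by (auto simp: mult.commute)
    next
      case False
      then have "coprime R (int q)" using qi by (metis prime_imp_coprime coprime_commute)
      then have "coprime R Qc" using Qc_def by simp
      moreover have "coprime R (9*(m+1))"
      proof -
        have "coprime R (3*3)" using cR3 by (subst coprime_mult_right_iff) simp
        then have "coprime R 9" by simp
        then show ?thesis using cRM by (simp only: coprime_mult_right_iff)
      qed
      ultimately have "\<exists>a. R = a^2" using sqL[of R "9*(m+1)" Qc z] f2' m1 Rpos Qpos by auto
      then show ?thesis by blast
    qed
    define k where "k = u div 3"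
    define s where "s = u mod 3"
    have uk: "u = 3*k + s" "0 \<le> s" "s < 3" unfolding k_def s_def by simp_all
    have k0: "k \<ge> 0" using u(2) k_def by simp
    have "s = 0 \<or> s = 1 \<or> s = 2" using uk by auto
    then show False
    proof (elim disjE)
      assume "s = 0"
      then have "3*(3*k^2) = 3*m+1" using u uk m_def by (simp add: power2_eq_square algebra_simps)
      then show False by presburger
    next
      assume s1: "s = 1"
      have "9*k^2+6*k+1 = 3*m+1" using u uk s1 m_def by (simp add: power2_eq_square algebra_simps)
      then have mk: "m = 3*k^2+2*k" by simp
      have kp: "k > 0"
      proof (rule ccontr)
        assume "\<not> k > 0" then have "k = 0" using k0 by simp
        then show False using mk m1 by simp
      qed
      show False
      proof (rule G[OF H(2) Qc_def, where S="3*k^2+3*k+1" and T="9*k^2+3*k+1" and R=R and M="m+1"])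
        show "R = (3*k^2+3*k+1) * (9*k^2+3*k+1)" unfolding R_def mk by (simp add: power2_eq_square algebra_simps)
        show "3*k^2+3*k+1 > 0" "9*k^2+3*k+1 > 0" "m+1 > 0" using k0 m1 by (simp_all add: add_nonneg_pos)
        show "coprime (3*k^2+3*k+1) (9*k^2+3*k+1)"
        proof (rule copST[OF Sodd, where e="-(3*k+1)"])
          show "coprime (3*k^2+3*k+1) (-(3*k+1))"
            by (rule bez[where a=3 and b="3*k+2"]) (simp add: power2_eq_square algebra_simps)
        qed (simp add: algebra_simps)
        show "coprime R (m+1)" by (rule cRM)
        show "\<And>w. 9*k^2+3*k+1 \<noteq> w^2"
          by (rule nonsq[of "3*k"]) (use kp in \<open>simp_all add: power2_eq_square algebra_simps\<close>)
        show "(\<exists>a. R = a^2) \<or> (\<exists>w z'. m+1 = w^2 \<and> int q dvd R \<and> R * (m+1) = Qc * z'^2)" by (rule K)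
        show "\<And>a w. 3*k^2+3*k+1 = a^2 \<Longrightarrow> m+1 = w^2 \<Longrightarrow> False"
        proof -
          fix a w assume h: "3*k^2+3*k+1 = a^2" "m+1 = w^2"
          have "a^2 = 3*k^2+3*k+1" "w^2 = 3*k^2+2*k+1" using h mk by simp_all
          then show False using D1[OF kp] by blast
        qed
      qed
    next
      assume s2: "s = 2"
      have "9*k^2+12*k+4 = 3*m+1" using u uk s2 m_def by (simp add: power2_eq_square algebra_simps)
      then have mk: "m = 3*k^2+4*k+1" by simp
      show False
      proof (rule G[OF H(2) Qc_def, where S="3*k^2+3*k+1" and T="9*k^2+15*k+7" and R=R and M="m+1"])
        show "R = (3*k^2+3*k+1) * (9*k^2+15*k+7)" unfolding R_def mk by (simp add: power2_eq_square algebra_simps)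
        show "3*k^2+3*k+1 > 0" "9*k^2+15*k+7 > 0" "m+1 > 0" using k0 m1 by (simp_all add: add_nonneg_pos)
        show "coprime (3*k^2+3*k+1) (9*k^2+15*k+7)"
        proof (rule copST[OF Sodd, where e="3*k+2"])
          show "coprime (3*k^2+3*k+1) (3*k+2)"
            by (rule bez[where a=3 and b="-(3*k+1)"]) (simp add: power2_eq_square algebra_simps)
        qed (simp add: algebra_simps)
        show "coprime R (m+1)" by (rule cRM)
        show "\<And>w. 9*k^2+15*k+7 \<noteq> w^2"
          by (rule nonsq[of "3*k+2"]) (use k0 in \<open>simp_all add: power2_eq_square algebra_simps\<close>)
        show "(\<exists>a. R = a^2) \<or> (\<exists>w z'. m+1 = w^2 \<and> int q dvd R \<and> R * (m+1) = Qc * z'^2)" by (rule K)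
        show "\<And>a w. 3*k^2+3*k+1 = a^2 \<Longrightarrow> m+1 = w^2 \<Longrightarrow> False"
        proof -
          fix a w assume h: "3*k^2+3*k+1 = a^2" "m+1 = w^2"
          have "a^2 = 3*k^2+3*k+1" "w^2 = 3*k^2+4*k+2" using h mk by simp_all
          then show False using D2[OF k0] by blast
        qed
      qed
    qed
  qed
qed

end
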